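(* Let $f:\mathbb{Z}\to\mathbb{R}$ be defined by $f(x)=\left|\sin\left(\frac{x+1}{100}\right)\right|$. Then $x=-1$ is the only global minimizer of $f$ on $\mathbb{Z}$; that is, $f(-1)=\min_{x\in\mathbb{Z}} f(x)$ and $f(x)>f(-1)$ for every integer $x\neq -1$. *)

theory Defs
  imports Complex_Main
begin

definition f :: "int \<Rightarrow> real" where
  "f x = \<bar>sin ((real_of_int x + 1) / 100)\<bar>"

end

theory Submission
  imports Defs "HOL-Computational_Algebra.Polynomial"
begin

lemma higher_pderiv_zero_deg:
  fixes p :: "real poly"
  assumes "degree p < k"
  shows "(pderiv ^^ k) p = 0"
proof -
  obtain m where k: "k = Suc m" and m: "degree p \<le> m" using assms
    by (metis Suc_le_eq Suc_le_lessD less_imp_Suc_add le_add1 add_Suc_right less_Suc_eq_le)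
  have "degree ((pderiv ^^ m) p) = 0" using m by (simp add: degree_higher_pderiv)
  hence "pderiv ((pderiv ^^ m) p) = 0" by (simp add: pderiv_eq_0_iff)
  thus ?thesis using k by simp
qed

lemma tele:
  fixes Q :: "real poly"
  shows "(\<Sum>j<m. smult ((-1)^j) ((pderiv^^(Suc (Suc (2*j)))) Q))
       + (\<Sum>j<m. smult ((-1)^j) ((pderiv^^(2*j)) Q))
       = Q - smult ((-1)^m) ((pderiv^^(2*m)) Q)"
proof (induction m)
  case 0
  then show ?case by simp
next
  case (Suc m)
  have e: "2 * Suc m = Suc (Suc (2*m))" by simp
  show ?case using Suc.IH unfolding e
    by (simp add: algebra_simps)
qed

lemma int_poly_power_coeff:
  fixes p :: "real poly"
  assumes "\<And>k. coeff p k \<in> \<int>"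
  shows "coeff (p ^ n) k \<in> \<int>"
proof (induction n arbitrary: k)
  case 0
  then show ?case by (simp add: coeff_1)
next
  case (Suc n)
  show ?case unfolding power_Suc coeff_mult
    by (intro Ints_sum Ints_mult assms Suc.IH)
qed

lemma pi_irrational: "pi \<notin> \<rat>"
proof
  assume "pi \<in> \<rat>"
  then obtain a b :: int where b: "b > 0" and pab: "pi = of_int a / of_int b"
    by (rule Rats_cases')
  define A where "A = real_of_int a"
  define B where "B = real_of_int b"
  have B0: "B > 0" using b by (simp add: B_def)
  have AB: "A = B * pi" using pab B0 unfolding A_def B_def by (simp add: field_simps)
  have A0: "A > 0" using AB B0 pi_gt_zero by simp
  have "(\<lambda>n. inverse (fact n) * (pi*A)^n) \<longlonglongrightarrow> 0"
    using summable_LIMSEQ_zero[OF summable_exp] by blast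
  hence "eventually (\<lambda>n. inverse (fact n) * (pi*A)^n < 1/pi) sequentially"
    by (rule order_tendstoD(2)) simp
  then obtain n where n0: "inverse (fact n) * (pi*A)^n < 1/pi"
    using eventually_sequentially by auto
  have nbound: "pi * ((pi*A)^n / fact n) < 1"
    using n0 pi_gt_zero by (simp add: field_simps)
  define P where "P = monom (1::real) n * [:A, -B:]^n"
  define Q where "Q = smult (1/fact n) P"
  have polyQ: "poly Q x = x^n * (A - B*x)^n / fact n" for x
    by (simp add: Q_def P_def poly_monom algebra_simps)
  have cl: "coeff [:A, -B:] k \<in> \<int>" for k
    by (cases k) (auto simp: A_def B_def coeff_pCons split: nat.splits)
  have coeffP: "coeff P k \<in> \<int>" for k
    unfolding P_def coeff_monom_mult using int_poly_power_coeff[OF cl] by simp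
  have coeffP0: "k < n \<Longrightarrow> coeff P k = 0" for k
    unfolding P_def coeff_monom_mult by simp
  have degP: "degree P \<le> 2*n"
  proof -
    have "degree P \<le> degree (monom (1::real) n) + degree ([:A, -B:]^n)"
      unfolding P_def by (rule degree_mult_le)
    also have "\<dots> \<le> n + degree [:A, -B:] * n"
      by (intro add_mono degree_power_le) (simp add: degree_monom_eq)
    also have "\<dots> \<le> 2*n" by simp
    finally show ?thesis .
  qed
  have degQ: "degree Q \<le> 2*n" using degP by (simp add: Q_def)
  have D0: "poly ((pderiv^^k) Q) 0 \<in> \<int>" for k
  proof -
    have e: "poly ((pderiv^^k) Q) 0 = fact k * (coeff P k / fact n)"
      by (simp add: poly_0_coeff_0 coeff_higher_pderiv pochhammer_fact[symmetric] Q_def)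
    show ?thesis
    proof (cases "k < n")
      case True
      then show ?thesis using e coeffP0 by simp
    next
      case False
      hence "fact n dvd (fact k :: nat)" by (simp add: fact_dvd)
      hence "real (fact k) / real (fact n) = real (fact k div fact n)"
        by (simp add: real_of_nat_div)
      hence "fact k / (fact n :: real) \<in> \<int>" by simp
      then show ?thesis unfolding e using coeffP
        by (metis Ints_mult times_divide_eq_left times_divide_eq_right)
    qed
  qed
  have sym: "pcompose Q [:pi, -1:] = Q"
  proof (rule poly_ext)
    fix x
    have "poly (pcompose Q [:pi, -1:]) x = poly Q (pi - x)"
      by (simp add: poly_pcompose)
    also have "\<dots> = (pi - x)^n * (B*x)^n / fact n"
      unfolding polyQ by (simp add: AB algebra_simps)
    also have "\<dots> = x^n * (B*(pi-x))^n / fact n"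
      by (simp only: power_mult_distrib mult_ac)
    also have "\<dots> = poly Q x"
    proof -
      have "A - B*x = B*(pi-x)" using AB by (simp add: algebra_simps)
      thus ?thesis unfolding polyQ by simp
    qed
    finally show "poly (pcompose Q [:pi, -1:]) x = poly Q x" .
  qed
  have symk: "(pderiv^^k) Q = smult ((-1)^k) (pcompose ((pderiv^^k) Q) [:pi, -1:])" for k
  proof (induction k)
    case 0
    then show ?case using sym by simp
  next
    case (Suc k)
    have "(pderiv^^Suc k) Q = pderiv ((pderiv^^k) Q)" by simp
    also have "\<dots> = pderiv (smult ((-1)^k) (pcompose ((pderiv^^k) Q) [:pi, -1:]))"
      using Suc.IH by simp
    also have "\<dots> = smult ((-1)^Suc k) (pcompose ((pderiv^^Suc k) Q) [:pi, -1:])"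
      by (simp add: pderiv_smult pderiv_pcompose pderiv_pCons)
    finally show ?case .
  qed
  have Dpi: "poly ((pderiv^^k) Q) pi \<in> \<int>" for k
  proof -
    have "poly ((pderiv^^k) Q) pi = (-1)^k * poly ((pderiv^^k) Q) 0"
      by (subst symk) (simp add: poly_pcompose)
    thus ?thesis using D0[of k] by (metis Ints_mult Ints_power Ints_minus Ints_1)
  qed
  define F where "F = (\<Sum>j<Suc n. smult ((-1)^j) ((pderiv^^(2*j)) Q))"
  have FF: "pderiv (pderiv F) + F = Q"
  proof -
    have "pderiv (pderiv F) = (\<Sum>j<Suc n. smult ((-1)^j) ((pderiv^^(Suc (Suc (2*j)))) Q))"
    proof -
      have "pderiv (pderiv F) = (pderiv^^2) F" by (simp add: numeral_2_eq_2)
      also have "\<dots> = (\<Sum>j<Suc n. (pderiv^^2) (smult ((-1)^j) ((pderiv^^(2*j)) Q)))"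
        unfolding F_def by (rule higher_pderiv_sum)
      also have "\<dots> = (\<Sum>j<Suc n. smult ((-1)^j) ((pderiv^^(Suc (Suc (2*j)))) Q))"
        by (simp add: higher_pderiv_smult numeral_2_eq_2 pderiv_smult)
      finally show ?thesis .
    qed
    moreover have "(pderiv^^(2*Suc n)) Q = 0"
      by (rule higher_pderiv_zero_deg) (use degQ in simp)
    ultimately show ?thesis using tele[where m="Suc n" and Q=Q] unfolding F_def by simp
  qed
  have polyF_int: "poly F x \<in> \<int>" if "x = 0 \<or> x = pi" for x
  proof -
    have "poly F x = (\<Sum>j<Suc n. (-1)^j * poly ((pderiv^^(2*j)) Q) x)"
      by (simp add: F_def poly_sum)
    also have "\<dots> \<in> \<int>"
      using that D0 Dpi by (intro Ints_sum Ints_mult Ints_power Ints_minus Ints_1) auto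
    finally show ?thesis .
  qed
  define G where "G x = poly (pderiv F) x * sin x - poly F x * cos x" for x
  have dG: "DERIV G x :> poly Q x * sin x" for x
  proof -
    have "DERIV G x :> poly (pderiv (pderiv F)) x * sin x + poly (pderiv F) x * cos x
                     - (poly (pderiv F) x * cos x - poly F x * sin x)"
      unfolding G_def by (auto intro!: derivative_eq_intros)
    moreover have "poly (pderiv (pderiv F)) x * sin x + poly (pderiv F) x * cos x
                     - (poly (pderiv F) x * cos x - poly F x * sin x) = poly Q x * sin x"
      using arg_cong[OF FF, of "\<lambda>p. poly p x"] by (simp add: algebra_simps flip: distrib_left)
    ultimately show ?thesis by simp
  qed
  obtain z where z: "0 < z" "z < pi" and mvt: "G pi - G 0 = (pi - 0) * (poly Q z * sin z)"
    using MVT2[of 0 pi G "\<lambda>x. poly Q x * sin x"] dG pi_gt_zero by blast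
  have GN: "G pi - G 0 = poly F pi + poly F 0" by (simp add: G_def)
  have N: "poly F pi + poly F 0 \<in> \<int>" using polyF_int by auto
  have pos1: "A - B*z > 0" using AB B0 z by (simp add: algebra_simps)
  have pos: "poly Q z * sin z > 0"
    using pos1 z sin_gt_zero[of z] unfolding polyQ by simp
  have le1: "z * (A - B*z) \<le> pi * A"
    using z pos1 B0 A0 by (intro mult_mono) auto
  have "z^n * (A - B*z)^n = (z * (A - B*z))^n" by (simp add: power_mult_distrib)
  also have "\<dots> \<le> (pi*A)^n" using le1 z pos1 by (intro power_mono) auto
  finally have "poly Q z \<le> (pi*A)^n / fact n" unfolding polyQ
    by (simp add: divide_right_mono)
  moreover have "poly Q z \<ge> 0" using pos1 z unfolding polyQ by simp
  ultimately have "poly Q z * sin z \<le> (pi*A)^n / fact n"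
    using sin_le_one[of z] by (meson mult_left_le order_trans)
  hence up: "pi * (poly Q z * sin z) < 1"
    using nbound pi_gt_zero by (meson mult_left_mono less_eq_real_def le_less_trans)
  have "poly F pi + poly F 0 > 0" "poly F pi + poly F 0 < 1"
    using mvt GN pos up pi_gt_zero by auto
  moreover obtain m :: int where "poly F pi + poly F 0 = of_int m" using N by (rule Ints_cases)
  ultimately have "0 < m" "m < 1" by simp_all
  thus False by simp
qed

theorem theorem1:
  shows "f (-1) = (INF x\<in>(UNIV::int set). f x) \<and> (\<forall>x::int. x \<noteq> -1 \<longrightarrow> f x > f (-1))"
proof -
  have f1: "f (-1) = 0" by (simp add: f_def)
  have gt: "f x > 0" if "x \<noteq> -1" for x
  proof -
    have "sin ((real_of_int x + 1) / 100) \<noteq> 0"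
    proof
      assume "sin ((real_of_int x + 1) / 100) = 0"
      then obtain i :: int where i: "(real_of_int x + 1) / 100 = of_int i * pi"
        by (auto simp: sin_zero_iff_int2)
      have "x + 1 \<noteq> 0" using that by simp
      hence "i \<noteq> 0" using i by auto
      hence "pi = of_int (x + 1) / of_int (100 * i)" using i by (simp add: field_simps)
      hence "pi \<in> \<rat>" by (metis Rats_divide Rats_of_int)
      thus False using pi_irrational by simp
    qed
    thus ?thesis by (simp add: f_def)
  qed
  have nn: "f x \<ge> 0" for x by (simp add: f_def)
  have "(INF x\<in>(UNIV::int set). f x) = 0"
  proof (rule antisym)
    show "(INF x\<in>(UNIV::int set). f x) \<le> 0"
    proof -
      have "(INF x\<in>(UNIV::int set). f x) \<le> f (-1)"
        by (rule cINF_lower) (auto intro: bdd_belowI2[where m=0] simp: nn)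
      thus ?thesis using f1 by simp
    qed
    show "0 \<le> (INF x\<in>(UNIV::int set). f x)"
      using nn by (intro cINF_greatest) auto
  qed
  thus ?thesis using f1 gt by simp
qed

end
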